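(* Let $T_1(B_1,C_1)$ and $T_2(B_2,C_2)$ be proper $(2,3)$-poles (with $|B_i|=2$, $|C_i|=3$). Form the $(2,2,1)$-pole $M=\operatorname{TT}(T_1,T_2)$ by performing the junction of $C_1$ and $C_2$ (creating three new edges), choosing one of these three new edges, subdividing it with a new vertex $v$, and attaching to $v$ a new dangling edge with semiedge $r$; the connectors of $M$ are $B_1=\{b,b'\}$, $B_2=\{c,c'\}$ and $\{r\}$. Then every colouring $\varphi$ of $M$ satisfies $\varphi(b)\ne\varphi(b')$, $\varphi(c)\ne\varphi(c')$ and $\varphi(b)+\varphi(b')+\varphi(c)+\varphi(c')+\varphi(r)=0$. Moreover, if $T_1$ and $T_2$ are both perfect, then every $5$-tuple $(a_1,a_2,d_1,d_2,e)\in\mathbb{K}^5$ with $a_1\ne a_2$, $d_1\ne d_2$ and $a_1+a_2+d_1+d_2+e=0$ equals $(\varphi(b),\varphi(b'),\varphi(c),\varphi(c'),\varphi(r))$ for some colouring $\varphi$ of $M$.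
   Context: A multipole consists of vertices and edges; each edge has two ends, each either incident with a vertex or free; a free end is a semiedge. All multipoles are cubic (every vertex is incident with exactly three edge ends; loops and parallel edges allowed). Semiedges are partitioned into connectors; a $(c_1,\dots,c_n)$-pole has $n$ connectors of sizes $c_1,\dots,c_n$. The junction of two semiedges identifies the two free ends into a single edge; the junction of two connectors of equal size performs junctions of their semiedges along an arbitrary bijection. Let $\mathbb{K}=\{(0,1),(1,0),(1,1)\}\subset\mathbb{Z}_2\times\mathbb{Z}_2$. A colouring of a multipole assigns elements of $\mathbb{K}$ to edges so that at every vertex the three incident edge ends get distinct colours (equivalently sum to $0$). The flow through a connector $S$ under $\varphi$ is $\varphi_*(S)=\sum_{e\in S}\varphi(e)\in\mathbb{Z}_2\times\mathbb{Z}_2$. A $(2,3)$-pole $T(B,C)$ is proper if $\varphi_*(B)\ne 0$ and $\varphi_*(C)\neq0$ for every colouring $\varphi$ of $T$. A proper $(2,3)$-pole $T(\{a_1,a_2\},\{b_1,b_2,b_3\})$ is perfect if the set of tuples $(\varphi(a_1),\varphi(a_2),\varphi(b_1),\varphi(b_2),\varphi(b_3))$ over all its colourings equals $\{(x_1,x_2,y_1,y_2,y_3)\in\mathbb{K}^5: x_1+x_2=y_1+y_2+y_3\ne 0\}$. *)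

theory Defs
  imports Main "HOL-Library.Z2" "HOL-Library.Product_Plus"
begin

text \<open>A multipole is given by a set of vertices, a set of darts (edge ends), a partial
  incidence map sending each dart to the vertex it is incident with (None = free end,
  i.e. a semiedge), and a fixed-point-free involution mate pairing the two ends of
  every edge.  Thus each edge is a pair of darts, and loops / parallel edges are allowed.\<close>

record ('v, 'd) multipole =
  verts :: "'v set"
  darts :: "'d set"
  vtx   :: "'d \<Rightarrow> 'v option"
  mate  :: "'d \<Rightarrow> 'd"

definition darts_at :: "('v, 'd) multipole \<Rightarrow> 'v \<Rightarrow> 'd set" where
  "darts_at M v = {d \<in> darts M. vtx M d = Some v}"

definition semiedges :: "('v, 'd) multipole \<Rightarrow> 'd set" where
  "semiedges M = {d \<in> darts M. vtx M d = None}"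

definition wf_multipole :: "('v, 'd) multipole \<Rightarrow> bool" where
  "wf_multipole M \<longleftrightarrow>
     finite (verts M) \<and> finite (darts M) \<and>
     (\<forall>d \<in> darts M. mate M d \<in> darts M \<and> mate M d \<noteq> d \<and> mate M (mate M d) = d) \<and>
     (\<forall>d \<in> darts M. \<forall>v. vtx M d = Some v \<longrightarrow> v \<in> verts M) \<and>
     (\<forall>v \<in> verts M. card (darts_at M v) = 3)"

definition is_pole :: "('v, 'd) multipole \<Rightarrow> 'd list list \<Rightarrow> bool" where
  "is_pole M cs \<longleftrightarrow> wf_multipole M \<and> distinct (concat cs) \<and> set (concat cs) = semiedges M"

text \<open>\<open>\<int>\<^sub>2 \<times> \<int>\<^sub>2\<close> is \<open>bit \<times> bit\<close>; K is the set of its nonzero elements.\<close>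
definition K :: "(bit \<times> bit) set" where
  "K = {(0, 1), (1, 0), (1, 1)}"

text \<open>A colouring assigns a colour from K to every edge (i.e. equal colours to both ends of
  every edge) such that at every vertex the three incident edge ends get distinct colours.\<close>
definition colouring :: "('v, 'd) multipole \<Rightarrow> ('d \<Rightarrow> bit \<times> bit) \<Rightarrow> bool" where
  "colouring M \<phi> \<longleftrightarrow>
     (\<forall>d \<in> darts M. \<phi> d \<in> K \<and> \<phi> (mate M d) = \<phi> d) \<and>
     (\<forall>v \<in> verts M. inj_on \<phi> (darts_at M v))"

definition flow :: "('d \<Rightarrow> bit \<times> bit) \<Rightarrow> 'd list \<Rightarrow> bit \<times> bit" where
  "flow \<phi> S = sum_list (map \<phi> S)"

definition proper23 :: "('v, 'd) multipole \<Rightarrow> 'd list \<Rightarrow> 'd list \<Rightarrow> bool" where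
  "proper23 T B C \<longleftrightarrow> is_pole T [B, C] \<and> length B = 2 \<and> length C = 3 \<and>
     (\<forall>\<phi>. colouring T \<phi> \<longrightarrow> flow \<phi> B \<noteq> 0 \<and> flow \<phi> C \<noteq> 0)"

definition perfect23 :: "('v, 'd) multipole \<Rightarrow> 'd list \<Rightarrow> 'd list \<Rightarrow> bool" where
  "perfect23 T B C \<longleftrightarrow> proper23 T B C \<and>
     {(\<phi> (B!0), \<phi> (B!1), \<phi> (C!0), \<phi> (C!1), \<phi> (C!2)) | \<phi>. colouring T \<phi>} =
     {(x1, x2, y1, y2, y3). x1 \<in> K \<and> x2 \<in> K \<and> y1 \<in> K \<and> y2 \<in> K \<and> y3 \<in> K \<and>
        x1 + x2 = y1 + y2 + y3 \<and> x1 + x2 \<noteq> 0}"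

definition dunion :: "('v1, 'd1) multipole \<Rightarrow> ('v2, 'd2) multipole \<Rightarrow> ('v1 + 'v2, 'd1 + 'd2) multipole" where
  "dunion M N = \<lparr> verts = Inl ` verts M \<union> Inr ` verts N,
                  darts = Inl ` darts M \<union> Inr ` darts N,
                  vtx = case_sum (\<lambda>d. map_option Inl (vtx M d)) (\<lambda>d. map_option Inr (vtx N d)),
                  mate = case_sum (\<lambda>d. Inl (mate M d)) (\<lambda>d. Inr (mate N d)) \<rparr>"

text \<open>Junction of two semiedges s and t: the two free ends are identified, i.e. the darts
  s and t disappear and the remaining ends of their edges become the two ends of one edge.\<close>
definition junction :: "('v, 'd) multipole \<Rightarrow> 'd \<Rightarrow> 'd \<Rightarrow> ('v, 'd) multipole" where
  "junction M s t = M \<lparr> darts := darts M - {s, t},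
                        mate := (mate M)(mate M s := mate M t, mate M t := mate M s) \<rparr>"

definition junctions :: "('v, 'd) multipole \<Rightarrow> ('d \<times> 'd) list \<Rightarrow> ('v, 'd) multipole" where
  "junctions M ps = fold (\<lambda>(s, t) N. junction N s t) ps M"

text \<open>Gadget: a new vertex v (the unique vertex, of type unit) with three incident edges
  SP--SP', SQ--SQ', SR--SR' whose other ends SP', SQ', SR' are free.  Junction of SP' and SQ'
  with the two semiedges forming a new edge is exactly subdividing that new edge by v;
  the edge SR--SR' is the new dangling edge at v, with semiedge r = SR'.\<close>
datatype sdart = SP | SP' | SQ | SQ' | SR | SR'

definition star :: "(unit, sdart) multipole" where
  "star = \<lparr> verts = {()}, darts = UNIV,
            vtx = (\<lambda>d. if d \<in> {SP, SQ, SR} then Some () else None),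
            mate = (\<lambda>d. case d of SP \<Rightarrow> SP' | SP' \<Rightarrow> SP | SQ \<Rightarrow> SQ' | SQ' \<Rightarrow> SQ
                                 | SR \<Rightarrow> SR' | SR' \<Rightarrow> SR) \<rparr>"

text \<open>TT(T1,T2): junction of C1 and C2 along the bijection i \<mapsto> sigma i of positions,
  with the new edge arising from C1!j and C2!(sigma j) subdivided by the new vertex v,
  which carries a new dangling edge with semiedge r.\<close>
definition TT :: "('v1, 'd1) multipole \<Rightarrow> 'd1 list \<Rightarrow> ('v2, 'd2) multipole \<Rightarrow> 'd2 list \<Rightarrow>
                  (nat \<Rightarrow> nat) \<Rightarrow> nat \<Rightarrow> (('v1 + 'v2) + unit, ('d1 + 'd2) + sdart) multipole" where
  "TT T1 C1 T2 C2 \<sigma> j =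
     junctions (dunion (dunion T1 T2) star)
       ([(Inl (Inl (C1 ! i)), Inl (Inr (C2 ! \<sigma> i))). i \<leftarrow> [0..<3], i \<noteq> j] @
        [(Inl (Inl (C1 ! j)), Inr SP'), (Inl (Inr (C2 ! \<sigma> j)), Inr SQ')])"

end

theory Submission
  imports Defs
begin

definition inv_mp :: "('v,'d) multipole \<Rightarrow> bool" where
  "inv_mp M \<longleftrightarrow> (\<forall>d\<in>darts M. mate M d \<in> darts M \<and> mate M d \<noteq> d \<and> mate M (mate M d) = d)"

lemma inv_in: "inv_mp M \<Longrightarrow> d \<in> darts M \<Longrightarrow> mate M d \<in> darts M"
  and inv_ne: "inv_mp M \<Longrightarrow> d \<in> darts M \<Longrightarrow> mate M d \<noteq> d"
  and inv_mm: "inv_mp M \<Longrightarrow> d \<in> darts M \<Longrightarrow> mate M (mate M d) = d"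
  by (auto simp: inv_mp_def)

lemma inv_inj: "inv_mp M \<Longrightarrow> x \<in> darts M \<Longrightarrow> y \<in> darts M \<Longrightarrow> mate M x = mate M y \<Longrightarrow> x = y"
proof -
  assume a: "inv_mp M" "x \<in> darts M" "y \<in> darts M" "mate M x = mate M y"
  have "mate M (mate M x) = mate M (mate M y)" using a(4) by simp
  then show "x = y" using inv_mm[OF a(1,2)] inv_mm[OF a(1,3)] by simp
qed

lemma inv_sym: "inv_mp M \<Longrightarrow> x \<in> darts M \<Longrightarrow> mate M x = y \<Longrightarrow> mate M y = x"
proof -
  assume a: "inv_mp M" "x \<in> darts M" "mate M x = y"
  show "mate M y = x" using inv_mm[OF a(1,2)] a(3) by simp
qed

lemma junction_simps[simp]:
  "verts (junction M s t) = verts M" "darts (junction M s t) = darts M - {s,t}"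
  "vtx (junction M s t) = vtx M"
  "mate (junction M s t) = (mate M)(mate M s := mate M t, mate M t := mate M s)"
  by (simp_all add: junction_def)

lemma semiedges_junction: "semiedges (junction M s t) = semiedges M - {s,t}"
  by (auto simp: semiedges_def)

lemma darts_at_junction: "s \<in> semiedges M \<Longrightarrow> t \<in> semiedges M \<Longrightarrow>
   darts_at (junction M s t) v = darts_at M v"
  by (auto simp: darts_at_def semiedges_def)

lemma inv_junction:
  assumes I: "inv_mp M" and st: "s \<in> darts M" "t \<in> darts M" "s \<noteq> t"
  shows "inv_mp (junction M s t)"
  unfolding inv_mp_def
proof (intro ballI)
  fix d assume d: "d \<in> darts (junction M s t)"
  have dM: "d \<in> darts M" "d \<noteq> s" "d \<noteq> t" using d by auto
  show "mate (junction M s t) d \<in> darts (junction M s t) \<and> mate (junction M s t) d \<noteq> d \<and>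
        mate (junction M s t) (mate (junction M s t) d) = d"
  proof (cases "mate M s = t")
    case True
    hence mt: "mate M t = s" using inv_sym[OF I st(1), of t] by auto
    have "mate M d \<noteq> s" using inv_sym[OF I dM(1), of s] True dM by auto
    moreover have "mate M d \<noteq> t" using inv_sym[OF I dM(1), of t] mt dM by auto
    ultimately show ?thesis using True mt inv_in[OF I dM(1)] inv_ne[OF I dM(1)] inv_mm[OF I dM(1)] dM by auto
  next
    case False
    have mt: "mate M t \<noteq> s" using inv_sym[OF I st(2), of s] False by auto
    have ms3: "mate M s \<noteq> mate M t" using inv_inj[OF I st(1,2)] st(3) by blast
    have ms1: "mate M s \<noteq> s" "mate M t \<noteq> t" using inv_ne[OF I st(1)] inv_ne[OF I st(2)] by auto
    have msd: "mate M s \<in> darts M" "mate M t \<in> darts M" using inv_in[OF I st(1)] inv_in[OF I st(2)] by auto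
    have mms: "mate M (mate M s) = s" "mate M (mate M t) = t" using inv_mm[OF I st(1)] inv_mm[OF I st(2)] by auto
    have jm: "\<And>x. mate (junction M s t) x = (if x = mate M t then mate M s else if x = mate M s then mate M t else mate M x)"
      by simp
    show ?thesis
    proof (cases "d = mate M s")
      case True
      then show ?thesis using jm ms3 msd ms1 mt False by simp
    next
      case F1: False
      show ?thesis
      proof (cases "d = mate M t")
        case True
        then show ?thesis using jm ms3 msd ms1 mt False by simp
      next
        case F2: False
        have a0: "mate M d \<noteq> s" using inv_sym[OF I dM(1), of s] F1 by auto
        have a00: "mate M d \<noteq> t" using inv_sym[OF I dM(1), of t] F2 by auto
        have a1: "mate M d \<noteq> mate M s" using inv_inj[OF I dM(1) st(1)] dM by auto
        have a2: "mate M d \<noteq> mate M t" using inv_inj[OF I dM(1) st(2)] dM by auto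
        have "mate (junction M s t) (mate (junction M s t) d) = d"
          using jm[of d] jm[of "mate M d"] F1 F2 a1 a2 inv_mm[OF I dM(1)] by simp
        then show ?thesis using jm[of d] F1 F2 a0 a00 inv_in[OF I dM(1)] inv_ne[OF I dM(1)] by simp
      qed
    qed
  qed
qed

lemma col_fwd:
  assumes I: "inv_mp M" and se: "s \<in> semiedges M" "t \<in> semiedges M" and "s \<noteq> t"
    and C: "colouring M \<psi>" and eq: "\<psi> s = \<psi> t"
  shows "colouring (junction M s t) \<psi>"
  unfolding colouring_def
proof (intro conjI ballI)
  have st: "s \<in> darts M" "t \<in> darts M" using se by (auto simp: semiedges_def)
  have c: "\<And>d. d \<in> darts M \<Longrightarrow> \<psi> d \<in> K \<and> \<psi> (mate M d) = \<psi> d" using C by (auto simp: colouring_def)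
  fix d assume d: "d \<in> darts (junction M s t)"
  hence dM: "d \<in> darts M" by auto
  show "\<psi> d \<in> K" using c dM by blast
  have e1: "\<psi> (mate M s) = \<psi> (mate M t)" using c[OF st(1)] c[OF st(2)] eq by simp
  have jm: "mate (junction M s t) d = (if d = mate M t then mate M s else if d = mate M s then mate M t else mate M d)"
    by simp
  show "\<psi> (mate (junction M s t) d) = \<psi> d"
  proof (cases "d = mate M t")
    case True
    then show ?thesis using jm e1 by simp
  next
    case False
    show ?thesis
    proof (cases "d = mate M s")
      case True then show ?thesis using jm e1 False by simp
    next
      case F2: False
      then show ?thesis using jm False c[OF dM] by simp
    qed
  qed
next
  fix v assume "v \<in> verts (junction M s t)"
  then show "inj_on \<psi> (darts_at (junction M s t) v)"
    using C by (simp add: darts_at_junction[OF se] colouring_def)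
qed

lemma col_back:
  assumes I: "inv_mp M" and se: "s \<in> semiedges M" "t \<in> semiedges M" and sne: "s \<noteq> t"
    and C: "colouring (junction M s t) \<phi>"
  shows "\<exists>\<phi>'. colouring M \<phi>' \<and> (\<forall>d\<in>darts M - {s,t}. \<phi>' d = \<phi> d) \<and> \<phi>' s = \<phi>' t"
proof -
  have st: "s \<in> darts M" "t \<in> darts M" using se by (auto simp: semiedges_def)
  have nst: "\<And>v. s \<notin> darts_at M v" "\<And>v. t \<notin> darts_at M v" using se
    by (auto simp: semiedges_def darts_at_def)
  have c1: "\<And>d. d \<in> darts M - {s,t} \<Longrightarrow> \<phi> d \<in> K \<and> \<phi> (mate (junction M s t) d) = \<phi> d"
    using C unfolding colouring_def by simp
  have c2: "\<And>v. v \<in> verts M \<Longrightarrow> inj_on \<phi> (darts_at M v)"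
    using C by (auto simp: colouring_def darts_at_junction[OF se])
  have injv: "inj_on (\<phi>(s := a, t := b)) (darts_at M v)" if "v \<in> verts M" for a b v
  proof -
    have "inj_on (\<phi>(s := a, t := b)) (darts_at M v) = inj_on \<phi> (darts_at M v)"
      by (rule inj_on_cong) (use nst in auto)
    then show ?thesis using c2[OF that] by simp
  qed
  show ?thesis
  proof (cases "mate M s = t")
    case True
    hence mt: "mate M t = s" using inv_sym[OF I st(1), of t] by auto
    define \<phi>' where "\<phi>' = \<phi>(s := (0,1), t := (0,1))"
    have "colouring M \<phi>'"
      unfolding colouring_def
    proof (rule conjI[OF ballI ballI])
      fix d assume d: "d \<in> darts M"
      show "\<phi>' d \<in> K \<and> \<phi>' (mate M d) = \<phi>' d"
      proof (cases "d \<in> {s,t}")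
        case True then show ?thesis using mt \<open>mate M s = t\<close> by (auto simp: \<phi>'_def K_def)
      next
        case False
        have "mate M d \<noteq> s" using inv_sym[OF I d, of s] \<open>mate M s = t\<close> False by auto
        moreover have "mate M d \<noteq> t" using inv_sym[OF I d, of t] mt False by auto
        ultimately show ?thesis using c1[of d] d False \<open>mate M s = t\<close> mt by (auto simp: \<phi>'_def)
      qed
    next
      fix v assume "v \<in> verts M"
      then show "inj_on \<phi>' (darts_at M v)" unfolding \<phi>'_def by (rule injv)
    qed
    then show ?thesis by (intro exI[of _ \<phi>']) (auto simp: \<phi>'_def)
  next
    case False
    have mt: "mate M t \<noteq> s" using inv_sym[OF I st(2), of s] False by auto
    have ms3: "mate M s \<noteq> mate M t" using inv_inj[OF I st(1,2)] sne by blast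
    have ms1: "mate M s \<noteq> s" "mate M t \<noteq> t" using inv_ne[OF I st(1)] inv_ne[OF I st(2)] by auto
    have msd: "mate M s \<in> darts M" "mate M t \<in> darts M" using inv_in[OF I st(1)] inv_in[OF I st(2)] by auto
    have mms: "mate M (mate M s) = s" "mate M (mate M t) = t" using inv_mm[OF I st(1)] inv_mm[OF I st(2)] by auto
    have eq: "\<phi> (mate M t) = \<phi> (mate M s)" and Ks: "\<phi> (mate M s) \<in> K"
      using c1[of "mate M s"] ms3 ms1 msd False by auto
    have Kt: "\<phi> (mate M t) \<in> K" using Ks eq by simp
    define \<phi>' where "\<phi>' = \<phi>(s := \<phi> (mate M s), t := \<phi> (mate M t))"
    have f: "\<phi>' s = \<phi> (mate M s)" "\<phi>' t = \<phi> (mate M t)" "\<phi>' (mate M s) = \<phi> (mate M s)"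
       "\<phi>' (mate M t) = \<phi> (mate M t)"
      unfolding \<phi>'_def using ms1 mt False sne by auto
    have "colouring M \<phi>'"
      unfolding colouring_def
    proof (rule conjI[OF ballI ballI])
      fix d assume d: "d \<in> darts M"
      show "\<phi>' d \<in> K \<and> \<phi>' (mate M d) = \<phi>' d"
      proof (cases "d \<in> {s,t}")
        case True then show ?thesis using f eq Ks Kt by auto
      next
        case F1: False
        show ?thesis
        proof (cases "d = mate M s \<or> d = mate M t")
          case True
          then show ?thesis using f eq Ks Kt mms by auto
        next
          case F2: False
          have "mate M d \<noteq> s" using inv_sym[OF I d, of s] F2 by auto
          moreover have "mate M d \<noteq> t" using inv_sym[OF I d, of t] F2 by auto
          ultimately show ?thesis using c1[of d] d F1 F2 by (auto simp: \<phi>'_def)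
        qed
      qed
    next
      fix v assume "v \<in> verts M"
      then show "inj_on \<phi>' (darts_at M v)" unfolding \<phi>'_def by (rule injv)
    qed
    then show ?thesis using f eq by (intro exI[of _ \<phi>']) (auto simp: \<phi>'_def)
  qed
qed

lemma semi_darts: "semiedges M \<subseteq> darts M" by (auto simp: semiedges_def)

lemma junctions_Nil[simp]: "junctions M [] = M" by (simp add: junctions_def)
lemma junctions_Cons[simp]: "junctions M ((s,t)#ps) = junctions (junction M s t) ps"
  by (simp add: junctions_def)

lemma junctions_fwd:
  "inv_mp M \<Longrightarrow> distinct (map fst ps @ map snd ps) \<Longrightarrow> set (map fst ps @ map snd ps) \<subseteq> semiedges M
   \<Longrightarrow> colouring M \<psi> \<Longrightarrow> (\<forall>(s,t)\<in>set ps. \<psi> s = \<psi> t) \<Longrightarrow> colouring (junctions M ps) \<psi>"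
proof (induction ps arbitrary: M)
  case Nil then show ?case by simp
next
  case (Cons p ps)
  obtain s t where p: "p = (s,t)" by fastforce
  have se: "s \<in> semiedges M" "t \<in> semiedges M" "s \<noteq> t" using Cons.prems(2,3) p by auto
  have I': "inv_mp (junction M s t)"
    using inv_junction[OF Cons.prems(1)] se semi_darts[of M] by auto
  have C': "colouring (junction M s t) \<psi>"
    using col_fwd[OF Cons.prems(1) se Cons.prems(4)] Cons.prems(5) p by auto
  have "set (map fst ps @ map snd ps) \<subseteq> semiedges (junction M s t)"
    using Cons.prems(2,3) p by (auto simp: semiedges_junction)
  moreover have "distinct (map fst ps @ map snd ps)" using Cons.prems(2) by auto
  moreover have "\<forall>(s,t)\<in>set ps. \<psi> s = \<psi> t" using Cons.prems(5) by simp
  ultimately show ?case using Cons.IH[OF I' _ _ C'] p by simp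
qed

lemma junctions_back:
  "inv_mp M \<Longrightarrow> distinct (map fst ps @ map snd ps) \<Longrightarrow> set (map fst ps @ map snd ps) \<subseteq> semiedges M
   \<Longrightarrow> colouring (junctions M ps) \<phi> \<Longrightarrow>
   \<exists>\<phi>'. colouring M \<phi>' \<and> (\<forall>d\<in>darts M - set (map fst ps @ map snd ps). \<phi>' d = \<phi> d)
        \<and> (\<forall>(s,t)\<in>set ps. \<phi>' s = \<phi>' t)"
proof (induction ps arbitrary: M \<phi>)
  case Nil then show ?case by auto
next
  case (Cons p ps)
  obtain s t where p: "p = (s,t)" by fastforce
  have se: "s \<in> semiedges M" "t \<in> semiedges M" "s \<noteq> t" using Cons.prems(2,3) p by auto
  have I': "inv_mp (junction M s t)"
    using inv_junction[OF Cons.prems(1)] se semi_darts[of M] by auto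
  have sub: "set (map fst ps @ map snd ps) \<subseteq> semiedges (junction M s t)"
    using Cons.prems(2,3) p by (auto simp: semiedges_junction)
  have dist: "distinct (map fst ps @ map snd ps)" using Cons.prems(2) by auto
  have "colouring (junctions (junction M s t) ps) \<phi>" using Cons.prems(4) p by simp
  from Cons.IH[OF I' dist sub this] obtain \<phi>1 where h1: "colouring (junction M s t) \<phi>1"
    "\<forall>d\<in>darts (junction M s t) - set (map fst ps @ map snd ps). \<phi>1 d = \<phi> d"
    "\<forall>(s,t)\<in>set ps. \<phi>1 s = \<phi>1 t"
    by blast
  obtain \<phi>' where h2: "colouring M \<phi>'" "\<forall>d\<in>darts M - {s,t}. \<phi>' d = \<phi>1 d" "\<phi>' s = \<phi>' t"
    using col_back[OF Cons.prems(1) se h1(1)] by blast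
  have ps_in: "\<And>x. x \<in> set (map fst ps @ map snd ps) \<Longrightarrow> x \<in> darts M - {s,t}"
    using Cons.prems(2,3) p semi_darts[of M] by auto
  have "\<forall>(a,b)\<in>set ps. \<phi>' a = \<phi>' b"
  proof (intro ballI, clarify)
    fix a b assume ab: "(a,b) \<in> set ps"
    hence "a \<in> set (map fst ps @ map snd ps)" "b \<in> set (map fst ps @ map snd ps)"
      by force+
    then show "\<phi>' a = \<phi>' b" using ps_in h2(2) h1(3) ab by auto
  qed
  moreover have "\<forall>d\<in>darts M - set (map fst (p#ps) @ map snd (p#ps)). \<phi>' d = \<phi> d"
    using h1(2) h2(2) p by auto
  ultimately show ?case using h2(1,3) p by auto
qed


lemma bb_self[simp]: "(x::bit\<times>bit) + x = 0"
  by (cases x) (simp add: prod_eq_iff)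
lemma bb_self2[simp]: "(x::bit\<times>bit) + (x + y) = y"
  by (metis add.assoc add.left_neutral bb_self)
lemma K_three: "a \<in> K \<Longrightarrow> b \<in> K \<Longrightarrow> c \<in> K \<Longrightarrow> a \<noteq> b \<Longrightarrow> a \<noteq> c \<Longrightarrow> b \<noteq> c \<Longrightarrow> a + b + c = 0"
  unfolding K_def by auto
lemma sumK: "sum id K = 0"
  unfolding K_def by simp
lemma finK: "finite K" "card K = 3" unfolding K_def by auto

lemma inv_sum_zero:
  "finite D \<Longrightarrow> (\<forall>d\<in>D. f d \<in> D \<and> f d \<noteq> d \<and> f (f d) = d) \<Longrightarrow> (\<forall>d\<in>D. g (f d) = g d)
   \<Longrightarrow> sum g D = (0::bit\<times>bit)"
proof (induction D rule: finite_psubset_induct)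
  case (psubset A)
  show ?case
  proof (cases "A = {}")
    case True thus ?thesis by simp
  next
    case False
    then obtain d where d: "d \<in> A" by blast
    have fd: "f d \<in> A" "f d \<noteq> d" using psubset.prems(1) d by auto
    let ?A' = "A - {d, f d}"
    have sub: "?A' \<subset> A" using d by auto
    have "\<forall>x\<in>?A'. f x \<in> ?A' \<and> f x \<noteq> x \<and> f (f x) = x"
    proof
      fix x assume x: "x \<in> ?A'"
      have "f x \<noteq> d" using x psubset.prems(1) by (metis Diff_iff insertCI)
      moreover have "f x \<noteq> f d" using x psubset.prems(1) d by (metis Diff_iff insertCI)
      ultimately show "f x \<in> ?A' \<and> f x \<noteq> x \<and> f (f x) = x" using x psubset.prems(1) by auto
    qed
    hence z: "sum g ?A' = 0" using psubset.IH[OF sub] psubset.prems(2) by auto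
    have "sum g A = g d + sum g (A - {d})" using psubset.hyps d by (simp add: sum.remove)
    also have "sum g (A - {d}) = g (f d) + sum g (A - {d} - {f d})"
      using psubset.hyps fd by (simp add: sum.remove)
    also have "A - {d} - {f d} = ?A'" by auto
    finally show ?thesis using z psubset.prems(2) d by simp
  qed
qed

lemma sum_darts_at:
  assumes "colouring T \<phi>" "wf_multipole T" "v \<in> verts T"
  shows "sum \<phi> (darts_at T v) = 0"
proof -
  have inj: "inj_on \<phi> (darts_at T v)" using assms by (auto simp: colouring_def)
  have sub: "\<phi> ` darts_at T v \<subseteq> K" using assms(1) by (auto simp: colouring_def darts_at_def)
  have c3: "card (darts_at T v) = 3" using assms(2,3) by (auto simp: wf_multipole_def)
  have "card (\<phi> ` darts_at T v) = 3" using card_image[OF inj] c3 by simp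
  hence eqK: "\<phi> ` darts_at T v = K" using card_subset_eq[OF finK(1) sub] finK(2) by simp
  have "sum \<phi> (darts_at T v) = sum id (\<phi> ` darts_at T v)" using sum.reindex[OF inj, of id] by simp
  then show ?thesis using eqK sumK by simp
qed

lemma kirchhoff:
  assumes P: "is_pole T [B, C]" and C: "colouring T \<phi>"
  shows "flow \<phi> B + flow \<phi> C = 0"
proof -
  have wf: "wf_multipole T" and dist: "distinct (B @ C)" and se: "set (B @ C) = semiedges T"
    using P by (auto simp: is_pole_def)
  have fin: "finite (darts T)" "finite (verts T)" using wf by (auto simp: wf_multipole_def)
  have S0: "sum \<phi> (darts T) = 0"
    apply (rule inv_sum_zero[where f = "mate T"])
    using wf C fin by (auto simp: wf_multipole_def colouring_def)
  have N: "darts T - semiedges T = (\<Union>v\<in>verts T. darts_at T v)"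
    using wf apply (auto simp: wf_multipole_def semiedges_def darts_at_def)
    by (metis option.exhaust)
  have "sum \<phi> (darts T - semiedges T) = (\<Sum>v\<in>verts T. sum \<phi> (darts_at T v))"
    unfolding N
    by (rule sum.UNION_disjoint) (use fin in \<open>auto simp: darts_at_def\<close>)
  also have "\<dots> = 0" using sum_darts_at[OF C wf] by simp
  finally have N0: "sum \<phi> (darts T - semiedges T) = 0" .
  have "sum \<phi> (darts T) = sum \<phi> (darts T - semiedges T) + sum \<phi> (semiedges T)"
    by (rule sum.subset_diff) (use fin semi_darts[of T] in auto)
  hence "sum \<phi> (semiedges T) = 0" using S0 N0 by simp
  moreover have "sum \<phi> (semiedges T) = flow \<phi> B + flow \<phi> C"
    using sum_list_distinct_conv_sum_set[OF dist, of \<phi>] se by (simp add: flow_def)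
  ultimately show ?thesis by simp
qed


lemma wf_inv: "wf_multipole M \<Longrightarrow> inv_mp M"
  by (simp add: wf_multipole_def inv_mp_def)

lemma dunion_simps[simp]:
  "verts (dunion M N) = Inl ` verts M \<union> Inr ` verts N"
  "darts (dunion M N) = Inl ` darts M \<union> Inr ` darts N"
  "vtx (dunion M N) (Inl d) = map_option Inl (vtx M d)"
  "vtx (dunion M N) (Inr d') = map_option Inr (vtx N d')"
  "mate (dunion M N) (Inl d) = Inl (mate M d)"
  "mate (dunion M N) (Inr d') = Inr (mate N d')"
  by (simp_all add: dunion_def)

lemma darts_at_dunion:
  "darts_at (dunion M N) (Inl v) = Inl ` darts_at M v"
  "darts_at (dunion M N) (Inr v') = Inr ` darts_at N v'"
  by (auto simp: darts_at_def)

lemma semiedges_dunion: "semiedges (dunion M N) = Inl ` semiedges M \<union> Inr ` semiedges N"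
  by (auto simp: semiedges_def)

lemma inv_dunion: "inv_mp M \<Longrightarrow> inv_mp N \<Longrightarrow> inv_mp (dunion M N)"
  by (auto simp: inv_mp_def)

lemma inj_Inl_img: "inj_on \<phi> (Inl ` A) = inj_on (\<phi> \<circ> Inl) A"
  by (auto simp: inj_on_def)
lemma inj_Inr_img: "inj_on \<phi> (Inr ` A) = inj_on (\<phi> \<circ> Inr) A"
  by (auto simp: inj_on_def)

lemma colouring_dunion:
  "colouring (dunion M N) \<phi> \<longleftrightarrow> colouring M (\<phi> \<circ> Inl) \<and> colouring N (\<phi> \<circ> Inr)"
proof -
  have a: "(\<forall>d\<in>darts (dunion M N). \<phi> d \<in> K \<and> \<phi> (mate (dunion M N) d) = \<phi> d) \<longleftrightarrow>
      (\<forall>d\<in>darts M. (\<phi> \<circ> Inl) d \<in> K \<and> (\<phi> \<circ> Inl) (mate M d) = (\<phi> \<circ> Inl) d) \<and>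
      (\<forall>d\<in>darts N. (\<phi> \<circ> Inr) d \<in> K \<and> (\<phi> \<circ> Inr) (mate N d) = (\<phi> \<circ> Inr) d)"
    by (simp add: ball_Un)
  have b: "(\<forall>v\<in>verts (dunion M N). inj_on \<phi> (darts_at (dunion M N) v)) \<longleftrightarrow>
      (\<forall>v\<in>verts M. inj_on (\<phi> \<circ> Inl) (darts_at M v)) \<and> (\<forall>v\<in>verts N. inj_on (\<phi> \<circ> Inr) (darts_at N v))"
    by (simp add: ball_Un darts_at_dunion inj_Inl_img inj_Inr_img)
  show ?thesis unfolding colouring_def using a b by blast
qed

lemma star_simps[simp]: "verts star = {()}" "darts star = UNIV"
  "mate star SP = SP'" "mate star SP' = SP" "mate star SQ = SQ'" "mate star SQ' = SQ"
  "mate star SR = SR'" "mate star SR' = SR"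
  by (simp_all add: star_def)

lemma darts_at_star: "darts_at star v = {SP, SQ, SR}"
  by (auto simp: darts_at_def star_def elim: sdart.exhaust)

lemma semiedges_star: "semiedges star = {SP', SQ', SR'}"
proof -
  have "\<And>x. x \<in> semiedges star \<longleftrightarrow> x \<in> {SP', SQ', SR'}"
    by (case_tac x) (auto simp: semiedges_def star_def)
  then show ?thesis by blast
qed

lemma inv_star: "inv_mp star"
  unfolding inv_mp_def
proof
  fix d :: sdart show "mate star d \<in> darts star \<and> mate star d \<noteq> d \<and> mate star (mate star d) = d"
    by (cases d) auto
qed

lemma colouring_star: "colouring star \<psi> \<longleftrightarrow>
   \<psi> SP \<in> K \<and> \<psi> SQ \<in> K \<and> \<psi> SR \<in> K \<and> \<psi> SP' = \<psi> SP \<and> \<psi> SQ' = \<psi> SQ \<and> \<psi> SR' = \<psi> SR \<and>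
   \<psi> SP \<noteq> \<psi> SQ \<and> \<psi> SP \<noteq> \<psi> SR \<and> \<psi> SQ \<noteq> \<psi> SR"
proof -
  have "(\<forall>d\<in>darts star. \<psi> d \<in> K \<and> \<psi> (mate star d) = \<psi> d) \<longleftrightarrow>
     \<psi> SP \<in> K \<and> \<psi> SQ \<in> K \<and> \<psi> SR \<in> K \<and> \<psi> SP' = \<psi> SP \<and> \<psi> SQ' = \<psi> SQ \<and> \<psi> SR' = \<psi> SR"
  proof
    assume "\<forall>d\<in>darts star. \<psi> d \<in> K \<and> \<psi> (mate star d) = \<psi> d"
    then show "\<psi> SP \<in> K \<and> \<psi> SQ \<in> K \<and> \<psi> SR \<in> K \<and> \<psi> SP' = \<psi> SP \<and> \<psi> SQ' = \<psi> SQ \<and> \<psi> SR' = \<psi> SR"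
      using star_simps(3,5,7) by (metis UNIV_I star_simps(2))
  next
    assume a: "\<psi> SP \<in> K \<and> \<psi> SQ \<in> K \<and> \<psi> SR \<in> K \<and> \<psi> SP' = \<psi> SP \<and> \<psi> SQ' = \<psi> SQ \<and> \<psi> SR' = \<psi> SR"
    show "\<forall>d\<in>darts star. \<psi> d \<in> K \<and> \<psi> (mate star d) = \<psi> d"
    proof
      fix d :: sdart show "\<psi> d \<in> K \<and> \<psi> (mate star d) = \<psi> d" using a by (cases d) auto
    qed
  qed
  moreover have "(\<forall>v\<in>verts star. inj_on \<psi> (darts_at star v)) \<longleftrightarrow>
     \<psi> SP \<noteq> \<psi> SQ \<and> \<psi> SP \<noteq> \<psi> SR \<and> \<psi> SQ \<noteq> \<psi> SR"
    by (auto simp: darts_at_star)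
  ultimately show ?thesis unfolding colouring_def by blast
qed

lemma bb_eq: "(x::bit\<times>bit) + y = 0 \<Longrightarrow> x = y"
  by (metis add.assoc add.right_neutral bb_self)

lemma nonzero_K: "(z::bit\<times>bit) \<noteq> 0 \<Longrightarrow> z \<in> K"
  by (cases z) (auto simp: K_def zero_prod_def elim: bit_not_zero_iff[THEN iffD1, elim_format])

lemma zero_notin_K: "0 \<notin> K"
  by (auto simp: K_def zero_prod_def)


lemma less3: "(i::nat) < 3 \<longleftrightarrow> i = 0 \<or> i = 1 \<or> i = 2" by auto
lemma upt3: "[0..<3] = [0::nat, 1, 2]" by (simp add: eval_nat_numeral upt_rec)
lemma lt3: "{..<3::nat} = {0,1,2}" by auto
lemma sum3: "(\<Sum>i<3::nat. f i) = f 0 + f 1 + f (2::nat)" by (simp add: lt3 add.assoc)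

theorem mainTheorem3:
  fixes T1 :: "('v1, 'd1) multipole" and B1 C1 :: "'d1 list"
    and T2 :: "('v2, 'd2) multipole" and B2 C2 :: "'d2 list"
    and \<sigma> :: "nat \<Rightarrow> nat" and j :: nat
  assumes P1: "proper23 T1 B1 C1"
    and P2: "proper23 T2 B2 C2"
    and sigma: "bij_betw \<sigma> {..<3} {..<3}"
    and j: "j < 3"
  defines "M \<equiv> TT T1 C1 T2 C2 \<sigma> j"
    and "b \<equiv> Inl (Inl (B1 ! 0))" and "b' \<equiv> Inl (Inl (B1 ! 1))"
    and "c \<equiv> Inl (Inr (B2 ! 0))" and "c' \<equiv> Inl (Inr (B2 ! 1))"
    and "r \<equiv> Inr SR'"
  shows "(\<forall>\<phi>. colouring M \<phi> \<longrightarrow>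
            \<phi> b \<noteq> \<phi> b' \<and> \<phi> c \<noteq> \<phi> c' \<and> \<phi> b + \<phi> b' + \<phi> c + \<phi> c' + \<phi> r = 0)
       \<and> (perfect23 T1 B1 C1 \<and> perfect23 T2 B2 C2 \<longrightarrow>
            (\<forall>a1 a2 d1 d2 e. a1 \<in> K \<and> a2 \<in> K \<and> d1 \<in> K \<and> d2 \<in> K \<and> e \<in> K \<and>
               a1 \<noteq> a2 \<and> d1 \<noteq> d2 \<and> a1 + a2 + d1 + d2 + e = 0 \<longrightarrow>
               (\<exists>\<phi>. colouring M \<phi> \<and> \<phi> b = a1 \<and> \<phi> b' = a2 \<and> \<phi> c = d1 \<and> \<phi> c' = d2 \<and> \<phi> r = e)))"
proof -
  define D where "D = dunion (dunion T1 T2) star"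
  define L :: "((('d1 + 'd2) + sdart) \<times> (('d1 + 'd2) + sdart)) list" where "L = [(Inl (Inl (C1 ! i)), Inl (Inr (C2 ! \<sigma> i))). i \<leftarrow> [0..<3], i \<noteq> j] @
        [(Inl (Inl (C1 ! j)), Inr SP'), (Inl (Inr (C2 ! \<sigma> j)), Inr SQ')]"
  have MD: "M = junctions D L" unfolding M_def D_def L_def TT_def by simp
  have pole1: "is_pole T1 [B1, C1]" and lB1: "length B1 = 2" and lC1: "length C1 = 3"
    and pr1: "\<And>\<phi>. colouring T1 \<phi> \<Longrightarrow> flow \<phi> B1 \<noteq> 0"
    using P1 by (auto simp: proper23_def)
  have pole2: "is_pole T2 [B2, C2]" and lB2: "length B2 = 2" and lC2: "length C2 = 3"
    and pr2: "\<And>\<phi>. colouring T2 \<phi> \<Longrightarrow> flow \<phi> B2 \<noteq> 0"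
    using P2 by (auto simp: proper23_def)
  have wf1: "wf_multipole T1" and dist1: "distinct (B1 @ C1)" and se1: "set (B1 @ C1) = semiedges T1"
    using pole1 by (auto simp: is_pole_def)
  have wf2: "wf_multipole T2" and dist2: "distinct (B2 @ C2)" and se2: "set (B2 @ C2) = semiedges T2"
    using pole2 by (auto simp: is_pole_def)
  have invD: "inv_mp D" unfolding D_def
    by (intro inv_dunion inv_star wf_inv wf1 wf2)
  have sig_lt: "\<And>i. i < 3 \<Longrightarrow> \<sigma> i < 3" using sigma by (auto simp: bij_betw_def)
  have sig_inj: "\<And>i k. i < 3 \<Longrightarrow> k < 3 \<Longrightarrow> \<sigma> i = \<sigma> k \<Longrightarrow> i = k"
    using sigma by (auto simp: bij_betw_def inj_on_def)
  have dC1: "\<And>i k. i < 3 \<Longrightarrow> k < 3 \<Longrightarrow> C1 ! i = C1 ! k \<longleftrightarrow> i = k"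
    using dist1 lC1 by (simp add: nth_eq_iff_index_eq)
  have dC2: "C2 ! \<sigma> i = C2 ! \<sigma> k \<longleftrightarrow> i = k" if a: "i < 3" "k < 3" for i k
  proof -
    have "distinct C2" using dist2 by simp
    hence "C2 ! \<sigma> i = C2 ! \<sigma> k \<longleftrightarrow> \<sigma> i = \<sigma> k"
      using nth_eq_iff_index_eq[of C2 "\<sigma> i" "\<sigma> k"] sig_lt a lC2 by simp
    then show ?thesis using sig_inj a by blast
  qed
  have sB1: "set B1 \<subseteq> semiedges T1" and sC1: "set C1 \<subseteq> semiedges T1"
    unfolding se1[symmetric] by simp_all
  have sB2: "set B2 \<subseteq> semiedges T2" and sC2: "set C2 \<subseteq> semiedges T2"
    unfolding se2[symmetric] by simp_all
  have C1se: "\<And>i. i < 3 \<Longrightarrow> C1 ! i \<in> semiedges T1"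
    using sC1 nth_mem lC1 by (metis subsetD)
  have C2se: "\<And>i. i < 3 \<Longrightarrow> C2 ! \<sigma> i \<in> semiedges T2"
    using sC2 nth_mem lC2 sig_lt by (metis subsetD)
  have B1se: "B1 ! 0 \<in> semiedges T1" "B1 ! 1 \<in> semiedges T1"
    using sB1 nth_mem[of 0 B1] nth_mem[of 1 B1] lB1 by auto
  have B2se: "B2 ! 0 \<in> semiedges T2" "B2 ! 1 \<in> semiedges T2"
    using sB2 nth_mem[of 0 B2] nth_mem[of 1 B2] lB2 by auto
  have B1nC1: "B1 ! 0 \<noteq> C1 ! i \<and> B1 ! 1 \<noteq> C1 ! i" if a: "i < 3" for i
  proof -
    have d: "\<And>x. x \<in> set B1 \<Longrightarrow> x \<notin> set C1" using dist1 by auto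
    have m: "B1 ! 0 \<in> set B1" "B1 ! 1 \<in> set B1" "C1 ! i \<in> set C1"
      using nth_mem[of 0 B1] nth_mem[of 1 B1] nth_mem[of i C1] lB1 lC1 a by simp_all
    show ?thesis using d[OF m(1)] d[OF m(2)] m(3) by metis
  qed
  have B2nC2: "B2 ! 0 \<noteq> C2 ! \<sigma> i \<and> B2 ! 1 \<noteq> C2 ! \<sigma> i" if a: "i < 3" for i
  proof -
    have d: "\<And>x. x \<in> set B2 \<Longrightarrow> x \<notin> set C2" using dist2 by auto
    have m: "B2 ! 0 \<in> set B2" "B2 ! 1 \<in> set B2" "C2 ! \<sigma> i \<in> set C2"
      using nth_mem[of 0 B2] nth_mem[of 1 B2] nth_mem[of "\<sigma> i" C2] lB2 lC2 sig_lt[OF a] by simp_all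
    show ?thesis using d[OF m(1)] d[OF m(2)] m(3) by metis
  qed
  have setL: "set L \<subseteq> {(Inl (Inl (C1 ! i)), Inl (Inr (C2 ! \<sigma> i))) | i. i < 3} \<union>
      {(Inl (Inl (C1 ! j)), Inr SP'), (Inl (Inr (C2 ! \<sigma> j)), Inr SQ')}"
    unfolding L_def by auto
  have elems: "set (map fst L @ map snd L) \<subseteq>
     {Inl (Inl (C1 ! i)) | i. i < 3} \<union> {Inl (Inr (C2 ! \<sigma> i)) | i. i < 3} \<union> {Inr SP', Inr SQ'}"
  proof
    fix x assume "x \<in> set (map fst L @ map snd L)"
    then obtain p where p: "p \<in> set L" "x = fst p \<or> x = snd p" by auto
    show "x \<in> {Inl (Inl (C1 ! i)) | i. i < 3} \<union> {Inl (Inr (C2 ! \<sigma> i)) | i. i < 3} \<union> {Inr SP', Inr SQ'}"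
    proof -
      have "p \<in> {(Inl (Inl (C1 ! i)), Inl (Inr (C2 ! \<sigma> i))) | i. i < 3} \<union>
        {(Inl (Inl (C1 ! j)), Inr SP'), (Inl (Inr (C2 ! \<sigma> j)), Inr SQ')}" using setL p(1) by blast
      then show ?thesis using p(2) j by auto
    qed
  qed
  have distL: "distinct (map fst L @ map snd L)"
  proof -
    have "j = 0 \<or> j = 1 \<or> j = 2" using j by auto
    moreover have ne: "C1 ! 0 \<noteq> C1 ! 1" "C1 ! 0 \<noteq> C1 ! 2" "C1 ! 1 \<noteq> C1 ! 2"
      "C2 ! \<sigma> 0 \<noteq> C2 ! \<sigma> 1" "C2 ! \<sigma> 0 \<noteq> C2 ! \<sigma> 2" "C2 ! \<sigma> 1 \<noteq> C2 ! \<sigma> 2"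
      "C1 ! 1 \<noteq> C1 ! 0" "C1 ! 2 \<noteq> C1 ! 0" "C1 ! 2 \<noteq> C1 ! 1"
      "C2 ! \<sigma> 1 \<noteq> C2 ! \<sigma> 0" "C2 ! \<sigma> 2 \<noteq> C2 ! \<sigma> 0" "C2 ! \<sigma> 2 \<noteq> C2 ! \<sigma> 1"
      using dC1 dC2 by auto
    ultimately show ?thesis unfolding L_def by (elim disjE) (simp_all add: upt3)
  qed
  have subL: "set (map fst L @ map snd L) \<subseteq> semiedges D"
    using elems C1se C2se unfolding D_def by (auto simp: semiedges_dunion semiedges_star)
  have notin: "b \<notin> set (map fst L @ map snd L)" "b' \<notin> set (map fst L @ map snd L)"
     "c \<notin> set (map fst L @ map snd L)" "c' \<notin> set (map fst L @ map snd L)"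
     "r \<notin> set (map fst L @ map snd L)"
    using elems B1nC1 B2nC2 unfolding b_def b'_def c_def c'_def r_def by auto
  have indarts: "b \<in> darts D" "b' \<in> darts D" "c \<in> darts D" "c' \<in> darts D" "r \<in> darts D"
    unfolding D_def b_def b'_def c_def c'_def r_def using B1se B2se semi_darts[of T1] semi_darts[of T2]
    by auto
  have pairs: "(\<forall>(s,t)\<in>set L. \<psi> s = \<psi> t) \<longleftrightarrow>
     (\<forall>i<3. i \<noteq> j \<longrightarrow> \<psi> (Inl (Inl (C1 ! i))) = \<psi> (Inl (Inr (C2 ! \<sigma> i)))) \<and>
     \<psi> (Inl (Inl (C1 ! j))) = \<psi> (Inr SP') \<and> \<psi> (Inl (Inr (C2 ! \<sigma> j))) = \<psi> (Inr SQ')" for \<psi>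
    unfolding L_def by auto
  have B1eq: "B1 = [B1 ! 0, B1 ! 1]"
  proof -
    from lB1 obtain u0 u1 where "B1 = [u0,u1]" by (auto simp: numeral_2_eq_2 length_Suc_conv)
    then show ?thesis by simp
  qed
  have B2eq: "B2 = [B2 ! 0, B2 ! 1]"
  proof -
    from lB2 obtain u0 u1 where "B2 = [u0,u1]" by (auto simp: numeral_2_eq_2 length_Suc_conv)
    then show ?thesis by simp
  qed
  have C1eq: "C1 = [C1 ! 0, C1 ! 1, C1 ! 2]"
  proof -
    from lC1 obtain u0 u1 u2 where "C1 = [u0,u1,u2]" by (auto simp: numeral_3_eq_3 length_Suc_conv)
    then show ?thesis by simp
  qed
  have C2eq: "C2 = [C2 ! 0, C2 ! 1, C2 ! 2]"
  proof -
    from lC2 obtain u0 u1 u2 where "C2 = [u0,u1,u2]" by (auto simp: numeral_3_eq_3 length_Suc_conv)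
    then show ?thesis by simp
  qed
  have flowB1: "flow \<psi> B1 = \<psi> (B1 ! 0) + \<psi> (B1 ! 1)" for \<psi>
    by (subst B1eq) (simp add: flow_def)
  have flowB2: "flow \<psi> B2 = \<psi> (B2 ! 0) + \<psi> (B2 ! 1)" for \<psi>
    by (subst B2eq) (simp add: flow_def)
  have flowC1: "flow \<psi> C1 = (\<Sum>i<3. \<psi> (C1 ! i))" for \<psi>
    by (subst C1eq) (simp add: flow_def sum3 add.assoc)
  have flowC2: "flow \<psi> C2 = (\<Sum>i<3. \<psi> (C2 ! \<sigma> i))" for \<psi>
  proof -
    have "(\<Sum>i<3. \<psi> (C2 ! \<sigma> i)) = (\<Sum>i<3. \<psi> (C2 ! i))"
      using sum.reindex_bij_betw[OF sigma, of "\<lambda>m. \<psi> (C2 ! m)"] by simp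
    then show ?thesis by (subst C2eq) (simp add: flow_def sum3 add.assoc)
  qed
  have part1: "\<phi> b \<noteq> \<phi> b' \<and> \<phi> c \<noteq> \<phi> c' \<and> \<phi> b + \<phi> b' + \<phi> c + \<phi> c' + \<phi> r = 0"
    if col: "colouring M \<phi>" for \<phi>
  proof -
    from junctions_back[OF invD distL subL col[unfolded MD]] obtain \<phi>' where
      h: "colouring D \<phi>'" "\<forall>d\<in>darts D - set (map fst L @ map snd L). \<phi>' d = \<phi> d"
         "\<forall>(s,t)\<in>set L. \<phi>' s = \<phi>' t" by blast
    have agree: "\<phi>' b = \<phi> b" "\<phi>' b' = \<phi> b'" "\<phi>' c = \<phi> c" "\<phi>' c' = \<phi> c'" "\<phi>' r = \<phi> r"
      using h(2) notin indarts by auto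
    define \<psi>1 where "\<psi>1 = \<phi>' \<circ> Inl \<circ> Inl"
    define \<psi>2 where "\<psi>2 = \<phi>' \<circ> Inl \<circ> Inr"
    define \<psi>3 where "\<psi>3 = \<phi>' \<circ> Inr"
    have c1: "colouring T1 \<psi>1" and c2: "colouring T2 \<psi>2" and c3: "colouring star \<psi>3"
      using h(1) unfolding D_def \<psi>1_def \<psi>2_def \<psi>3_def colouring_dunion by (simp_all add: comp_assoc)
    have p: "\<forall>i<3. i \<noteq> j \<longrightarrow> \<psi>1 (C1 ! i) = \<psi>2 (C2 ! \<sigma> i)" "\<psi>1 (C1 ! j) = \<psi>3 SP'"
      "\<psi>2 (C2 ! \<sigma> j) = \<psi>3 SQ'"
      using h(3)[unfolded pairs] by (simp_all add: \<psi>1_def \<psi>2_def \<psi>3_def)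
    have st: "\<psi>3 SP + \<psi>3 SQ + \<psi>3 SR = 0" "\<psi>3 SP' = \<psi>3 SP" "\<psi>3 SQ' = \<psi>3 SQ" "\<psi>3 SR' = \<psi>3 SR"
      using c3 unfolding colouring_star by (auto intro: K_three)
    have k1: "flow \<psi>1 B1 = flow \<psi>1 C1" using kirchhoff[OF pole1 c1] by (rule bb_eq)
    have k2: "flow \<psi>2 B2 = flow \<psi>2 C2" using kirchhoff[OF pole2 c2] by (rule bb_eq)
    have "(\<Sum>i<3. \<psi>1 (C1 ! i)) + (\<Sum>i<3. \<psi>2 (C2 ! \<sigma> i)) = (\<Sum>i<3. \<psi>1 (C1 ! i) + \<psi>2 (C2 ! \<sigma> i))"
      by (simp add: sum.distrib)
    also have "\<dots> = (\<psi>1 (C1 ! j) + \<psi>2 (C2 ! \<sigma> j)) + (\<Sum>i\<in>{..<3} - {j}. \<psi>1 (C1 ! i) + \<psi>2 (C2 ! \<sigma> i))"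
      using j by (simp add: sum.remove)
    also have "(\<Sum>i\<in>{..<3} - {j}. \<psi>1 (C1 ! i) + \<psi>2 (C2 ! \<sigma> i)) = 0"
      using p(1) by (intro sum.neutral) auto
    finally have ssum: "flow \<psi>1 C1 + flow \<psi>2 C2 = \<psi>3 SP + \<psi>3 SQ"
      using p(2,3) st by (simp add: flowC1 flowC2)
    have rr: "\<phi> r = \<psi>3 SR" using agree st unfolding \<psi>3_def r_def by simp
    have n1: "\<phi> b \<noteq> \<phi> b'" using pr1[OF c1] flowB1[of \<psi>1] agree
      unfolding \<psi>1_def b_def b'_def by auto
    have n2: "\<phi> c \<noteq> \<phi> c'" using pr2[OF c2] flowB2[of \<psi>2] agree
      unfolding \<psi>2_def c_def c'_def by auto
    have "\<phi> b + \<phi> b' + \<phi> c + \<phi> c' = flow \<psi>1 B1 + flow \<psi>2 B2"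
      using agree unfolding flowB1 flowB2 \<psi>1_def \<psi>2_def b_def b'_def c_def c'_def
      by (simp add: add.assoc)
    also have "\<dots> = \<psi>3 SP + \<psi>3 SQ" using k1 k2 ssum by simp
    finally have "\<phi> b + \<phi> b' + \<phi> c + \<phi> c' + \<phi> r = \<psi>3 SP + \<psi>3 SQ + \<psi>3 SR" using rr by simp
    then show ?thesis using n1 n2 st(1) by simp
  qed
  have part2: "\<exists>\<phi>. colouring M \<phi> \<and> \<phi> b = a1 \<and> \<phi> b' = a2 \<and> \<phi> c = d1 \<and> \<phi> c' = d2 \<and> \<phi> r = e"
    if perf1: "perfect23 T1 B1 C1" and perf2: "perfect23 T2 B2 C2"
      and H: "a1 \<in> K" "a2 \<in> K" "d1 \<in> K" "d2 \<in> K" "e \<in> K" "a1 \<noteq> a2" "d1 \<noteq> d2"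
             "a1 + a2 + d1 + d2 + e = 0"
    for a1 a2 d1 d2 e
  proof -
    define x where "x = a1 + a2"
    define y where "y = d1 + d2"
    define z0 :: "bit \<times> bit" where "z0 = (0, 1)"
    have z0K: "z0 \<in> K" by (simp add: z0_def K_def)
    have x0: "x \<noteq> 0" using H(6) bb_eq unfolding x_def by blast
    have y0: "y \<noteq> 0" using H(7) bb_eq unfolding y_def by blast
    have "(x + y) + e = 0" using H(8) unfolding x_def y_def by (simp add: add.assoc)
    hence exy: "e = x + y" using bb_eq by metis
    have xK: "x \<in> K" and yK: "y \<in> K" using x0 y0 nonzero_K by auto
    have xy: "x \<noteq> y" using exy H(5) zero_notin_K by auto
    have xe: "x \<noteq> e"
    proof
      assume "x = e"
      hence "x + x = x + (x + y)" using exy by simp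
      hence "y = 0" by simp
      then show False using y0 by simp
    qed
    have ye: "y \<noteq> e"
    proof
      assume "y = e"
      hence "y + y = y + (y + x)" using exy by (simp add: add.commute)
      hence "x = 0" by simp
      then show False using x0 by simp
    qed
    define g where "g = (\<lambda>i::nat. if i = j then x else z0)"
    define f where "f = (\<lambda>m::nat. if m = \<sigma> j then y else z0)"
    have jc: "j = 0 \<or> j = 1 \<or> j = 2" using j by auto
    have sjc: "\<sigma> j = 0 \<or> \<sigma> j = 1 \<or> \<sigma> j = 2" using sig_lt[OF j] by auto
    have gsum: "g 0 + g 1 + g 2 = x"
      using jc unfolding g_def by (elim disjE) (simp_all add: add.assoc add.commute add.left_commute)
    have fsum: "f 0 + f 1 + f 2 = y"
      using sjc unfolding f_def by (elim disjE) (simp_all add: add.assoc add.commute add.left_commute)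
    have gK: "g i \<in> K" for i using xK z0K by (simp add: g_def)
    have fK: "f i \<in> K" for i using yK z0K by (simp add: f_def)
    have eq1: "{(\<phi> (B1!0), \<phi> (B1!1), \<phi> (C1!0), \<phi> (C1!1), \<phi> (C1!2)) | \<phi>. colouring T1 \<phi>} =
     {(x1, x2, y1, y2, y3). x1 \<in> K \<and> x2 \<in> K \<and> y1 \<in> K \<and> y2 \<in> K \<and> y3 \<in> K \<and>
        x1 + x2 = y1 + y2 + y3 \<and> x1 + x2 \<noteq> 0}" using perf1 by (simp add: perfect23_def)
    have "(a1, a2, g 0, g 1, g 2) \<in> {(x1, x2, y1, y2, y3). x1 \<in> K \<and> x2 \<in> K \<and> y1 \<in> K \<and> y2 \<in> K \<and> y3 \<in> K \<and>
        x1 + x2 = y1 + y2 + y3 \<and> x1 + x2 \<noteq> 0}"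
      using H(1,2) gK gsum x0 unfolding x_def by simp
    hence "(a1, a2, g 0, g 1, g 2) \<in> {(\<phi> (B1!0), \<phi> (B1!1), \<phi> (C1!0), \<phi> (C1!1), \<phi> (C1!2)) | \<phi>. colouring T1 \<phi>}"
      by (simp only: eq1)
    then obtain \<psi>1 where c1: "colouring T1 \<psi>1" and
      v1: "a1 = \<psi>1 (B1!0)" "a2 = \<psi>1 (B1!1)" "g 0 = \<psi>1 (C1!0)" "g 1 = \<psi>1 (C1!1)" "g 2 = \<psi>1 (C1!2)"
      by blast
    have eq2: "{(\<phi> (B2!0), \<phi> (B2!1), \<phi> (C2!0), \<phi> (C2!1), \<phi> (C2!2)) | \<phi>. colouring T2 \<phi>} =
     {(x1, x2, y1, y2, y3). x1 \<in> K \<and> x2 \<in> K \<and> y1 \<in> K \<and> y2 \<in> K \<and> y3 \<in> K \<and>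
        x1 + x2 = y1 + y2 + y3 \<and> x1 + x2 \<noteq> 0}" using perf2 by (simp add: perfect23_def)
    have "(d1, d2, f 0, f 1, f 2) \<in> {(x1, x2, y1, y2, y3). x1 \<in> K \<and> x2 \<in> K \<and> y1 \<in> K \<and> y2 \<in> K \<and> y3 \<in> K \<and>
        x1 + x2 = y1 + y2 + y3 \<and> x1 + x2 \<noteq> 0}"
      using H(3,4) fK fsum y0 unfolding y_def by simp
    hence "(d1, d2, f 0, f 1, f 2) \<in> {(\<phi> (B2!0), \<phi> (B2!1), \<phi> (C2!0), \<phi> (C2!1), \<phi> (C2!2)) | \<phi>. colouring T2 \<phi>}"
      by (simp only: eq2)
    then obtain \<psi>2 where c2: "colouring T2 \<psi>2" and
      v2: "d1 = \<psi>2 (B2!0)" "d2 = \<psi>2 (B2!1)" "f 0 = \<psi>2 (C2!0)" "f 1 = \<psi>2 (C2!1)" "f 2 = \<psi>2 (C2!2)"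
      by blast
    have g1: "\<psi>1 (C1 ! i) = g i" if "i < 3" for i
      using that v1 unfolding less3 by auto
    have f2: "\<psi>2 (C2 ! m) = f m" if "m < 3" for m
      using that v2 unfolding less3 by auto
    define \<psi>3 where "\<psi>3 = (\<lambda>d. case d of SP \<Rightarrow> x | SP' \<Rightarrow> x | SQ \<Rightarrow> y | SQ' \<Rightarrow> y | SR \<Rightarrow> e | SR' \<Rightarrow> e)"
    have c3: "colouring star \<psi>3"
      unfolding colouring_star \<psi>3_def using xK yK H(5) xy xe ye by simp
    define \<Psi> where "\<Psi> = case_sum (case_sum \<psi>1 \<psi>2) \<psi>3"
    have cD: "colouring D \<Psi>"
      unfolding D_def \<Psi>_def colouring_dunion using c1 c2 c3 by (simp add: case_sum_o_inj)
    have pr: "\<forall>(s,t)\<in>set L. \<Psi> s = \<Psi> t"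
      unfolding pairs
    proof (intro conjI allI impI)
      fix i :: nat assume i: "i < 3" "i \<noteq> j"
      have "\<sigma> i \<noteq> \<sigma> j" using sig_inj[OF i(1) j] i(2) by auto
      then show "\<Psi> (Inl (Inl (C1 ! i))) = \<Psi> (Inl (Inr (C2 ! \<sigma> i)))"
        using g1[OF i(1)] f2[OF sig_lt[OF i(1)]] i(2) unfolding \<Psi>_def g_def f_def by simp
    next
      show "\<Psi> (Inl (Inl (C1 ! j))) = \<Psi> (Inr SP')"
        using g1[OF j] unfolding \<Psi>_def g_def \<psi>3_def by simp
    next
      show "\<Psi> (Inl (Inr (C2 ! \<sigma> j))) = \<Psi> (Inr SQ')"
        using f2[OF sig_lt[OF j]] unfolding \<Psi>_def f_def \<psi>3_def by simp
    qed
    have cM: "colouring M \<Psi>" unfolding MD by (rule junctions_fwd[OF invD distL subL cD pr])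
    show ?thesis
      by (rule exI[of _ \<Psi>]) (use cM v1 v2 in \<open>simp add: \<Psi>_def \<psi>3_def b_def b'_def c_def c'_def r_def\<close>)
  qed
  show ?thesis using part1 part2 by blast
qed

end
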